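(* Consider the problem and algorithm AC2CD described in the context, let $\{x^k\}$ be a sequence produced by AC2CD, and assume $\lim_{k\to\infty}x^k=x^*$. Let $\mathcal A(x^* )=\{i:x^*_i=l_i\}\cup\{i:x^*_i=u_i\}$ and $D^*_{\min}=\min_{i\notin\mathcal A(x^* )}D_i(x^* )$ (which is well defined and positive), and let $k_N$ be the first outer iteration such that $\|x^k-x^*\|_\infty<D^*_{\min}$ for all $k>k_N$. Then for all $k>k_N$, \[ l_h<x^k_h<u_h\quad\text{for all } h\notin\mathcal A(x^* ). \]
   Context: Problem: minimize $f(x)$ subject to $e^T x = b$ and $l_i \le x_i \le u_i$ ($i=1,\dots,n$), where $n\ge 2$, $e$ is the all-ones vector, $b\in\mathbb{R}$, $l_i\in\mathbb{R}\cup\{-\infty\}$, $u_i\in\mathbb{R}\cup\{+\infty\}$, $l_i<u_i$, and $f:\mathbb{R}^n\to\mathbb{R}$ is continuously differentiable with $\nabla f$ Lipschitz continuous on $\mathbb{R}^n$. $\mathcal F$ is the feasible set, $e_i$ the $i$th unit vector. For $x\in\mathcal F$, $D_h(x)=\min\{x_h-l_h,u_h-x_h\}$. Algorithm AC2CD with parameters $\tau\in(0,1]$, $\gamma,\delta\in(0,1)$, $0<A_l\le A_u<\infty$ and starting point $x^0\in\mathcal F$: for $k=0,1,2,\dots$: let $D^k=\max_h D_h(x^k)$; choose $j(k)$ with $D_{j(k)}(x^k)\ge\tau D^k$; choose a permutation $(p^k_1,\dots,p^k_n)$ of $\{1,\dots,n\}$; set $z^{k,1}=x^k$; for $i=1,\dots,n$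 (inner iteration $(k,i)$): $g^{k,i}=\nabla_{j(k)}f(z^{k,i})-\nabla_{p^k_i}f(z^{k,i})$, $d^{k,i}=g^{k,i}(e_{p^k_i}-e_{j(k)})$; $\bar\alpha^{k,i}=\min\{u_{p^k_i}-z^{k,i}_{p^k_i},z^{k,i}_{j(k)}-l_{j(k)}\}/g^{k,i}$ if $g^{k,i}>0$, $=\min\{z^{k,i}_{p^k_i}-l_{p^k_i},u_{j(k)}-z^{k,i}_{j(k)}\}/|g^{k,i}|$ if $g^{k,i}<0$, $=0$ if $g^{k,i}=0$; choose $A^{k,i}\in[A_l,A_u]$, set $\Delta^{k,i}=\min\{\bar\alpha^{k,i},A^{k,i}\}$; starting from $\alpha=\Delta^{k,i}$, while $f(z^{k,i}+\alpha d^{k,i})>f(z^{k,i})+\gamma\alpha\nabla f(z^{k,i})^Td^{k,i}$ replace $\alpha$ by $\delta\alpha$; $\alpha^{k,i}$ is the final $\alpha$ and $z^{k,i+1}=z^{k,i}+\alpha^{k,i}d^{k,i}$. Then $x^{k+1}=z^{k,n+1}$. Standing assumptions: $\mathcal L_0=\{x\in\mathcal F: f(x)\le f(x^0)\}$ is nonempty and compact, and every $x\in\mathcal L_0$ has some index $i$ with $l_i<x_i<u_i$. *)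

theory Defs
  imports "HOL-Analysis.Analysis"
begin

text \<open>Coordinates are indexed by a finite type 'n (n = CARD('n)); lower bounds
  l i \<in> \<real> \<union> {-\<infinity>}, upper bounds u i \<in> \<real> \<union> {+\<infinity>} are extended reals.\<close>

definition feasible :: "('n::finite \<Rightarrow> ereal) \<Rightarrow> ('n \<Rightarrow> ereal) \<Rightarrow> real \<Rightarrow> real^'n \<Rightarrow> bool" where
  "feasible l u b x \<longleftrightarrow> (\<Sum>i\<in>UNIV. x $ i) = b \<and> (\<forall>i. l i \<le> ereal (x $ i) \<and> ereal (x $ i) \<le> u i)"

definition Dist :: "('n::finite \<Rightarrow> ereal) \<Rightarrow> ('n \<Rightarrow> ereal) \<Rightarrow> real^'n \<Rightarrow> 'n \<Rightarrow> ereal" where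
  "Dist l u x h = min (ereal (x $ h) - l h) (u h - ereal (x $ h))"

definition linf :: "real^'n::finite \<Rightarrow> real" where
  "linf x = (MAX i\<in>UNIV. \<bar>x $ i\<bar>)"

text \<open>Maximal feasible step \<open>\<bar>\<alpha>\<close> along d = g (e_p - e_j).\<close>
definition alpha_bar :: "('n::finite \<Rightarrow> ereal) \<Rightarrow> ('n \<Rightarrow> ereal) \<Rightarrow> real^'n \<Rightarrow> 'n \<Rightarrow> 'n \<Rightarrow> real \<Rightarrow> ereal" where
  "alpha_bar l u z j p g =
     (if g > 0 then min (u p - ereal (z $ p)) (ereal (z $ j) - l j) / ereal g
      else if g < 0 then min (ereal (z $ p) - l p) (u j - ereal (z $ j)) / ereal \<bar>g\<bar>
      else 0)"

text \<open>One inner iteration (k,i) of AC2CD: from z to z', with pivot index j = j(k)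
  and p = p^k_i; G is the gradient of f.\<close>
definition inner_step ::
  "(real^'n::finite \<Rightarrow> real) \<Rightarrow> (real^'n \<Rightarrow> real^'n) \<Rightarrow> ('n \<Rightarrow> ereal) \<Rightarrow> ('n \<Rightarrow> ereal) \<Rightarrow>
   real \<Rightarrow> real \<Rightarrow> real \<Rightarrow> real \<Rightarrow> 'n \<Rightarrow> 'n \<Rightarrow> real^'n \<Rightarrow> real^'n \<Rightarrow> bool" where
  "inner_step f G l u \<gamma> \<delta> A_l A_u j p z z' \<longleftrightarrow>
     (let g = G z $ j - G z $ p;
          d = g *\<^sub>R (axis p 1 - axis j 1);
          armijo = (\<lambda>\<alpha>. f (z + \<alpha> *\<^sub>R d) \<le> f z + \<gamma> * \<alpha> * (G z \<bullet> d))
      in \<exists>A \<Delta> m. A_l \<le> A \<and> A \<le> A_u \<and>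
           \<Delta> = real_of_ereal (min (alpha_bar l u z j p g) (ereal A)) \<and>
           armijo (\<delta> ^ m * \<Delta>) \<and> (\<forall>m'<m. \<not> armijo (\<delta> ^ m' * \<Delta>)) \<and>
           z' = z + (\<delta> ^ m * \<Delta>) *\<^sub>R d)"

definition AC2CD_seq ::
  "(real^'n::finite \<Rightarrow> real) \<Rightarrow> (real^'n \<Rightarrow> real^'n) \<Rightarrow> ('n \<Rightarrow> ereal) \<Rightarrow> ('n \<Rightarrow> ereal) \<Rightarrow>
   real \<Rightarrow> real \<Rightarrow> real \<Rightarrow> real \<Rightarrow> real \<Rightarrow> (nat \<Rightarrow> real^'n) \<Rightarrow> bool" where
  "AC2CD_seq f G l u \<tau> \<gamma> \<delta> A_l A_u x \<longleftrightarrow>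
     (\<forall>k. \<exists>j p z.
        Dist l u (x k) j \<ge> ereal \<tau> * (MAX h\<in>UNIV. Dist l u (x k) h) \<and>
        bij_betw p {1..CARD('n)} (UNIV :: 'n set) \<and>
        z 1 = x k \<and> z (CARD('n) + 1) = x (Suc k) \<and>
        (\<forall>i\<in>{1..CARD('n)}. inner_step f G l u \<gamma> \<delta> A_l A_u j (p i) (z i) (z (Suc i))))"

end

theory Submission imports Defs begin

definition inb :: "('n::finite \<Rightarrow> ereal) \<Rightarrow> ('n \<Rightarrow> ereal) \<Rightarrow> real^'n \<Rightarrow> bool" where
  "inb l u z \<longleftrightarrow> (\<forall>i. l i \<le> ereal (z $ i) \<and> ereal (z $ i) \<le> u i)"

lemma e1: fixes a :: ereal and g t :: real
  assumes "0 < g" "0 \<le> a" "ereal t \<le> a / ereal g" shows "ereal (t*g) \<le> a"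
proof (cases a)
  case (real r)
  then have "t \<le> r / g" using assms by simp
  then show ?thesis using real assms by (simp add: field_simps)
qed (use assms in auto)

lemma e2: "ereal c \<le> u - ereal z \<Longrightarrow> ereal (z + c) \<le> u"
  by (cases u) auto
lemma e3: "ereal c \<le> ereal z - l \<Longrightarrow> l \<le> ereal (z - c)"
  by (cases l) auto
lemma e0: fixes a :: ereal and g :: real
  assumes "0 < g" "0 \<le> a" shows "0 \<le> a / ereal g"
  using assms by (cases a) auto

lemma e4: "l \<le> ereal z \<Longrightarrow> 0 \<le> ereal z - l" by (cases l) auto
lemma e5: "ereal z \<le> u \<Longrightarrow> 0 \<le> u - ereal z" by (cases u) auto

lemma inner_inb:
  fixes z z' :: "real^'n::finite"
  assumes st: "inner_step f G l u \<gamma> \<delta> A_l A_u j p z z'" and z: "inb l u z"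
    and par: "0 < \<delta>" "\<delta> < 1" "0 < A_l"
  shows "inb l u z'"
proof -
  define g where "g = G z $ j - G z $ p"
  define d where "d = g *\<^sub>R (axis p 1 - axis j 1 :: real^'n)"
  obtain A \<Delta> m where A: "A_l \<le> A" and D: "\<Delta> = real_of_ereal (min (alpha_bar l u z j p g) (ereal A))"
    and z': "z' = z + (\<delta> ^ m * \<Delta>) *\<^sub>R d"
    using st unfolding inner_step_def Let_def g_def d_def by blast
  define t where "t = \<delta> ^ m * \<Delta>"
  have zi: "l i \<le> ereal (z $ i)" "ereal (z $ i) \<le> u i" for i using z unfolding inb_def by auto
  have ab0: "0 \<le> alpha_bar l u z j p g"
  proof -
    have a: "0 \<le> min (u p - ereal (z $ p)) (ereal (z $ j) - l j)"
      using zi[of p] zi[of j] e4 e5 by auto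
    have b: "0 \<le> min (ereal (z $ p) - l p) (u j - ereal (z $ j))"
      using zi[of p] zi[of j] e4 e5 by auto
    show ?thesis unfolding alpha_bar_def using e0[OF _ a, of g] e0[OF _ b, of "\<bar>g\<bar>"] by auto
  qed
  have "0 \<le> min (alpha_bar l u z j p g) (ereal A)" using ab0 A par by auto
  moreover have "min (alpha_bar l u z j p g) (ereal A) \<le> ereal A" by auto
  ultimately have Dm: "ereal \<Delta> = min (alpha_bar l u z j p g) (ereal A)" and D0: "0 \<le> \<Delta>"
    unfolding D by (cases "min (alpha_bar l u z j p g) (ereal A)"; auto)+
  have t0: "0 \<le> t" unfolding t_def using D0 par by auto
  have tD: "t \<le> \<Delta>" unfolding t_def using D0 par by (simp add: mult_left_le_one_le power_le_one)
  have tab: "ereal t \<le> alpha_bar l u z j p g" using tD Dm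
    by (metis dual_order.trans ereal_less_eq(3) min.cobounded1)
  have z'i: "z' $ i = z $ i + t * g * ((if i = p then 1 else 0) - (if i = j then 1 else 0))" for i
    unfolding z' d_def t_def by (simp add: axis_def)
  show ?thesis
  proof (cases "p = j \<or> g = 0")
    case True
    have "z' $ i = z $ i" for i using True z'i[of i] by (cases "i = p") auto
    then have "z' = z" by (simp add: vec_eq_iff)
    then show ?thesis using z by simp
  next
    case False
    then have pj: "p \<noteq> j" by auto
    have zp: "z' $ p = z $ p + t * g" using z'i[of p] pj by simp
    have zj: "z' $ j = z $ j - t * g" using z'i[of j] pj by simp
    have zo: "i \<noteq> p \<Longrightarrow> i \<noteq> j \<Longrightarrow> z' $ i = z $ i" for i using z'i[of i] by simp
    have fin: "inb l u z'" if "l p \<le> ereal (z' $ p)" "ereal (z' $ p) \<le> u p"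
       "l j \<le> ereal (z' $ j)" "ereal (z' $ j) \<le> u j"
    proof -
      have "l i \<le> ereal (z' $ i) \<and> ereal (z' $ i) \<le> u i" for i
      proof (cases "i = p")
        case True then show ?thesis using that by simp
      next
        case f1: False
        show ?thesis
        proof (cases "i = j")
          case True then show ?thesis using that by simp
        next
          case False then show ?thesis using zo[OF f1 False] zi[of i] by simp
        qed
      qed
      then show ?thesis unfolding inb_def by blast
    qed
    show ?thesis
    proof (cases "g > 0")
      case True
      have "ereal (t*g) \<le> min (u p - ereal (z $ p)) (ereal (z $ j) - l j)"
        apply (rule e1[OF True])
        using zi[of p] zi[of j] e4 e5 tab True unfolding alpha_bar_def by auto
      then have c: "ereal (t*g) \<le> u p - ereal (z $ p)" "ereal (t*g) \<le> ereal (z $ j) - l j" by auto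
      have tg: "0 \<le> t * g" using t0 True by simp
      show ?thesis
      proof (rule fin)
        show "ereal (z' $ p) \<le> u p" using e2[OF c(1)] zp by simp
        show "l j \<le> ereal (z' $ j)" using e3[OF c(2)] zj by simp
        show "l p \<le> ereal (z' $ p)" proof -
          have "ereal (z $ p) \<le> ereal (z' $ p)" using zp tg by simp
          then show ?thesis by (rule order.trans[OF zi(1)[of p]])
        qed
        show "ereal (z' $ j) \<le> u j" proof -
          have "ereal (z' $ j) \<le> ereal (z $ j)" using zj tg by simp
          then show ?thesis by (rule order.trans[OF _ zi(2)[of j]])
        qed
      qed
    next
      case gn: False
      then have g: "g < 0" using False by auto
      have "ereal (t*\<bar>g\<bar>) \<le> min (ereal (z $ p) - l p) (u j - ereal (z $ j))"
        apply (rule e1)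
        using zi[of p] zi[of j] e4 e5 tab g unfolding alpha_bar_def by auto
      then have c: "ereal (t*\<bar>g\<bar>) \<le> ereal (z $ p) - l p" "ereal (t*\<bar>g\<bar>) \<le> u j - ereal (z $ j)" by auto
      have ag: "t * \<bar>g\<bar> = - (t * g)" using g by simp
      have tg: "0 \<le> t * \<bar>g\<bar>" using t0 by simp
      show ?thesis
      proof (rule fin)
        show "l p \<le> ereal (z' $ p)" using e3[OF c(1)] zp ag by simp
        show "ereal (z' $ j) \<le> u j" using e2[OF c(2)] zj ag by simp
        show "ereal (z' $ p) \<le> u p" proof -
          have "ereal (z' $ p) \<le> ereal (z $ p)" using zp tg ag by simp
          then show ?thesis by (rule order.trans[OF _ zi(2)[of p]])
        qed
        show "l j \<le> ereal (z' $ j)" proof -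
          have "ereal (z $ j) \<le> ereal (z' $ j)" using zj tg ag by simp
          then show ?thesis by (rule order.trans[OF zi(1)[of j]])
        qed
      qed
    qed
  qed
qed


lemma seq_inb:
  fixes x :: "nat \<Rightarrow> real^'n::finite"
  assumes alg: "AC2CD_seq f G l u \<tau> \<gamma> \<delta> A_l A_u x" and x0: "inb l u (x 0)"
    and par: "0 < \<delta>" "\<delta> < 1" "0 < A_l"
  shows "inb l u (x k)"
proof (induction k)
  case 0 then show ?case using x0 .
next
  case (Suc k)
  obtain j p z where z1: "z 1 = x k" and zn: "z (CARD('n) + 1) = x (Suc k)"
    and st: "\<forall>i\<in>{1..CARD('n)}. inner_step f G l u \<gamma> \<delta> A_l A_u j (p i) (z i) (z (Suc i))"
    using alg unfolding AC2CD_seq_def by blast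
  have "1 \<le> i \<and> i \<le> CARD('n) + 1 \<longrightarrow> inb l u (z i)" for i
  proof (induction i)
    case 0 then show ?case by simp
  next
    case (Suc i)
    show ?case
    proof (cases "i = 0")
      case True then show ?thesis using z1 Suc.prems Suc.IH \<open>inb l u (x k)\<close> by simp
    next
      case False
      show ?thesis
      proof
        assume a: "1 \<le> Suc i \<and> Suc i \<le> CARD('n) + 1"
        then have "i \<in> {1..CARD('n)}" using False by auto
        moreover have "inb l u (z i)" using Suc.IH a False by auto
        ultimately show "inb l u (z (Suc i))" using inner_inb st par by blast
      qed
    qed
  qed
  then show ?case using zn[symmetric] by simp
qed

theorem theorem4:
  fixes f :: "real^'n::finite \<Rightarrow> real" and G :: "real^'n \<Rightarrow> real^'n"
    and l u :: "'n \<Rightarrow> ereal" and b \<tau> \<gamma> \<delta> A_l A_u :: real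
    and x :: "nat \<Rightarrow> real^'n" and xstar :: "real^'n"
  assumes n2: "CARD('n) \<ge> 2"
    and l_fin: "\<forall>i. l i \<noteq> \<infinity>" and u_fin: "\<forall>i. u i \<noteq> -\<infinity>" and lu: "\<forall>i. l i < u i"
    and grad: "\<forall>y. (f has_derivative (\<lambda>h. G y \<bullet> h)) (at y)"
    and lip: "\<exists>L. \<forall>y w. norm (G y - G w) \<le> L * norm (y - w)"
    and par: "0 < \<tau>" "\<tau> \<le> 1" "0 < \<gamma>" "\<gamma> < 1" "0 < \<delta>" "\<delta> < 1" "0 < A_l" "A_l \<le> A_u"
    and x0: "feasible l u b (x 0)"
    and L0: "{y. feasible l u b y \<and> f y \<le> f (x 0)} \<noteq> {}"
            "compact {y. feasible l u b y \<and> f y \<le> f (x 0)}"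
    and free: "\<forall>y. feasible l u b y \<and> f y \<le> f (x 0) \<longrightarrow> (\<exists>i. l i < ereal (y $ i) \<and> ereal (y $ i) < u i)"
    and alg: "AC2CD_seq f G l u \<tau> \<gamma> \<delta> A_l A_u x"
    and lim: "x \<longlonglongrightarrow> xstar"
  shows "let Act = {i. ereal (xstar $ i) = l i} \<union> {i. ereal (xstar $ i) = u i};
             Dmin = Min (Dist l u xstar ` (- Act));
             kN = (LEAST kN. \<forall>k>kN. ereal (linf (x k - xstar)) < Dmin)
         in \<forall>k>kN. \<forall>h. h \<notin> Act \<longrightarrow> l h < ereal (x k $ h) \<and> ereal (x k $ h) < u h"
proof -
  define Act where "Act = {i. ereal (xstar $ i) = l i} \<union> {i. ereal (xstar $ i) = u i}"
  define Dmin where "Dmin = Min (Dist l u xstar ` (- Act))"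
  define kN where "kN = (LEAST kN. \<forall>k>kN. ereal (linf (x k - xstar)) < Dmin)"
  have xi: "inb l u (x k)" for k
    by (rule seq_inb[OF alg _ par(5,6,7)]) (use x0 in \<open>simp add: feasible_def inb_def\<close>)
  have ci: "(\<lambda>k. x k $ i) \<longlonglongrightarrow> xstar $ i" for i using lim by (rule tendsto_vec_nth)
  have xs: "l i \<le> ereal (xstar $ i) \<and> ereal (xstar $ i) \<le> u i" for i
  proof
    show "l i \<le> ereal (xstar $ i)"
    proof (cases "l i")
      case (real r)
      have "r \<le> x k $ i" for k using xi[of k] real unfolding inb_def by (metis ereal_less_eq(3))
      then have "r \<le> xstar $ i"
        by (intro tendsto_lowerbound[OF ci] always_eventually) auto
      then show ?thesis using real by simp
    qed (use l_fin u_fin in auto)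
    show "ereal (xstar $ i) \<le> u i"
    proof (cases "u i")
      case (real r)
      have "x k $ i \<le> r" for k using xi[of k] real unfolding inb_def by (metis ereal_less_eq(3))
      then have "xstar $ i \<le> r"
        by (intro tendsto_upperbound[OF ci] always_eventually) auto
      then show ?thesis using real by simp
    qed (use l_fin u_fin in auto)
  qed
  have linf_le: "linf y \<le> norm y" for y :: "real^'n"
    unfolding linf_def by (simp add: component_le_norm_cart)
  have main: "\<forall>k>kN. \<forall>h. h \<notin> Act \<longrightarrow> l h < ereal (x k $ h) \<and> ereal (x k $ h) < u h"
  proof (intro allI impI)
    fix k h assume k: "k > kN" and h: "h \<notin> Act"
    have Dpos: "0 < Dist l u xstar h" if "h \<notin> Act" for h
    proof -
      have "l h < ereal (xstar $ h)" "ereal (xstar $ h) < u h"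
        using xs[of h] that unfolding Act_def by (auto simp: order_le_less)
      then show ?thesis unfolding Dist_def by (cases "l h"; cases "u h") auto
    qed
    have Dm0: "0 < Dmin" unfolding Dmin_def
      using h Dpos by (subst Min_gr_iff) auto
    have ex: "\<exists>kN. \<forall>k>kN. ereal (linf (x k - xstar)) < Dmin"
    proof (cases Dmin)
      case (real e)
      then have "0 < e" using Dm0 by simp
      from LIMSEQ_D[OF lim this] obtain N where N: "\<forall>n\<ge>N. norm (x n - xstar) < e" by blast
      have "\<forall>k>N. ereal (linf (x k - xstar)) < Dmin"
      proof (intro allI impI)
        fix k assume "k > N"
        then have "norm (x k - xstar) < e" using N by simp
        then have "linf (x k - xstar) < e" using linf_le[of "x k - xstar"] by linarith
        then show "ereal (linf (x k - xstar)) < Dmin" using real by simp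
      qed
      then show ?thesis by blast
    qed (use Dm0 in auto)
    have "ereal (linf (x k - xstar)) < Dmin"
      using LeastI_ex[OF ex] k unfolding kN_def by blast
    moreover have "Dmin \<le> Dist l u xstar h" unfolding Dmin_def using h by simp
    moreover have "\<bar>x k $ h - xstar $ h\<bar> \<le> linf (x k - xstar)" unfolding linf_def
      by (metis Max_ge UNIV_I finite finite_imageI image_eqI vector_minus_component)
    ultimately have "ereal \<bar>x k $ h - xstar $ h\<bar> < Dist l u xstar h"
      by (meson ereal_less_eq(3) order_le_less_trans order_less_le_trans)
    then have a: "ereal \<bar>x k $ h - xstar $ h\<bar> < ereal (xstar $ h) - l h"
      and b: "ereal \<bar>x k $ h - xstar $ h\<bar> < u h - ereal (xstar $ h)"
      unfolding Dist_def by auto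
    show "l h < ereal (x k $ h) \<and> ereal (x k $ h) < u h"
    proof
      show "l h < ereal (x k $ h)" using a by (cases "l h") auto
      show "ereal (x k $ h) < u h" using b by (cases "u h") auto
    qed
  qed
  then show ?thesis unfolding Let_def Act_def Dmin_def kN_def .
qed

end
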